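(* Let $k\ge 1$ be an integer. For any graph $G$ with minimum degree $\delta(G)\ge k$, $\mathrm{TC}_k(G)\ge \delta(G)-k+2$. This bound is sharp, i.e., there exist graphs attaining equality.
   Context: All graphs are finite, simple and connected. $N(v)$ denotes the open neighborhood of a vertex $v$. For a graph $G$ with $\delta(G)\ge k$, a set $S\subseteq V(G)$ is a total $k$-dominating set if $|N(v)\cap S|\ge k$ for every $v\in V(G)$. Two disjoint sets $U,W\subseteq V(G)$ form a total $k$-coalition if neither $U$ nor $W$ is a total $k$-dominating set, but $U\cup W$ is. A total $k$-coalition partition of $G$ is a partition $\Omega$ of $V(G)$ such that every set in $\Omega$ forms a total $k$-coalition with some other set in $\Omega$. The total $k$-coalition number $\mathrm{TC}_k(G)$ is the maximum cardinality of a total $k$-coalition partition of $G$. *)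

theory Defs
  imports Main
begin

definition graph :: "'a set \<Rightarrow> ('a \<Rightarrow> 'a \<Rightarrow> bool) \<Rightarrow> bool" where
  "graph V E \<longleftrightarrow> finite V \<and> V \<noteq> {}
     \<and> (\<forall>u v. E u v \<longrightarrow> u \<in> V \<and> v \<in> V)
     \<and> (\<forall>u v. E u v \<longrightarrow> E v u)
     \<and> (\<forall>v. \<not> E v v)
     \<and> (\<forall>u\<in>V. \<forall>v\<in>V. E\<^sup>*\<^sup>* u v)"

definition nbhd :: "'a set \<Rightarrow> ('a \<Rightarrow> 'a \<Rightarrow> bool) \<Rightarrow> 'a \<Rightarrow> 'a set" where
  "nbhd V E v = {u \<in> V. E v u}"

definition min_degree :: "'a set \<Rightarrow> ('a \<Rightarrow> 'a \<Rightarrow> bool) \<Rightarrow> nat" where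
  "min_degree V E = Min ((\<lambda>v. card (nbhd V E v)) ` V)"

definition total_k_dom :: "nat \<Rightarrow> 'a set \<Rightarrow> ('a \<Rightarrow> 'a \<Rightarrow> bool) \<Rightarrow> 'a set \<Rightarrow> bool" where
  "total_k_dom k V E S \<longleftrightarrow> S \<subseteq> V \<and> (\<forall>v\<in>V. card (nbhd V E v \<inter> S) \<ge> k)"

definition total_k_coalition :: "nat \<Rightarrow> 'a set \<Rightarrow> ('a \<Rightarrow> 'a \<Rightarrow> bool) \<Rightarrow> 'a set \<Rightarrow> 'a set \<Rightarrow> bool" where
  "total_k_coalition k V E U W \<longleftrightarrow> U \<inter> W = {}
     \<and> \<not> total_k_dom k V E U \<and> \<not> total_k_dom k V E W \<and> total_k_dom k V E (U \<union> W)"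

definition is_partition :: "'a set \<Rightarrow> 'a set set \<Rightarrow> bool" where
  "is_partition V \<Omega> \<longleftrightarrow> \<Union>\<Omega> = V \<and> {} \<notin> \<Omega>
     \<and> (\<forall>A\<in>\<Omega>. \<forall>B\<in>\<Omega>. A \<noteq> B \<longrightarrow> A \<inter> B = {})"

definition total_k_coalition_partition :: "nat \<Rightarrow> 'a set \<Rightarrow> ('a \<Rightarrow> 'a \<Rightarrow> bool) \<Rightarrow> 'a set set \<Rightarrow> bool" where
  "total_k_coalition_partition k V E \<Omega> \<longleftrightarrow> is_partition V \<Omega>
     \<and> (\<forall>A\<in>\<Omega>. \<exists>B\<in>\<Omega>. B \<noteq> A \<and> total_k_coalition k V E A B)"

definition TC :: "nat \<Rightarrow> 'a set \<Rightarrow> ('a \<Rightarrow> 'a \<Rightarrow> bool) \<Rightarrow> nat" where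
  "TC k V E = Max (card ` {\<Omega>. total_k_coalition_partition k V E \<Omega>})"

end

theory Submission
  imports Defs
begin

lemma tkcp_finite:
  assumes "finite V"
  shows "finite {\<Omega>. total_k_coalition_partition k V E \<Omega>}"
proof -
  have "{\<Omega>. total_k_coalition_partition k V E \<Omega>} \<subseteq> Pow (Pow V)"
    by (auto simp: total_k_coalition_partition_def is_partition_def)
  then show ?thesis using assms by (meson finite_Pow_iff finite_subset)
qed

lemma lower:
  assumes g: "graph V E" and kd: "min_degree V E \<ge> k" and k1: "k \<ge> 1"
  shows "\<exists>\<Omega>. total_k_coalition_partition k V E \<Omega> \<and> card \<Omega> = min_degree V E - k + 2"
proof -
  let ?d = "min_degree V E"
  have fin: "finite V" and ne: "V \<noteq> {}" and irr: "\<And>v. \<not> E v v"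
    using g by (auto simp: graph_def)
  have "?d \<in> (\<lambda>v. card (nbhd V E v)) ` V"
    unfolding min_degree_def using fin ne by (intro Min_in) auto
  then obtain v where vV: "v \<in> V" and dv: "card (nbhd V E v) = ?d" by auto
  have dle: "\<And>w. w \<in> V \<Longrightarrow> ?d \<le> card (nbhd V E w)"
    unfolding min_degree_def using fin by (intro Min_le) auto
  have finN: "\<And>w. finite (nbhd V E w)" using fin by (auto simp: nbhd_def)
  have NV: "\<And>w. nbhd V E w \<subseteq> V" by (auto simp: nbhd_def)
  have "?d - k + 1 \<le> card (nbhd V E v)" using dv kd k1 by linarith
  then obtain X where XN: "X \<subseteq> nbhd V E v" and cX: "card X = ?d - k + 1"
    by (rule obtain_subset_with_card_n)
  have XV: "X \<subseteq> V" using XN NV by blast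
  have finX: "finite X" using XN finN finite_subset by blast
  have vX: "v \<notin> X" using XN irr by (auto simp: nbhd_def)
  define R where "R = V - X"
  define \<Omega> where "\<Omega> = (\<lambda>u. {u}) ` X \<union> {R}"
  have vR: "v \<in> R" using vV vX R_def by auto
  have Rnot: "R \<notin> (\<lambda>u. {u}) ` X" using vR vX R_def by auto
  have cO: "card \<Omega> = ?d - k + 2"
  proof -
    have "card ((\<lambda>u. {u}) ` X) = card X" by (intro card_image) (auto simp: inj_on_def)
    then show ?thesis unfolding \<Omega>_def using Rnot finX cX by simp
  qed
  have part: "is_partition V \<Omega>"
    unfolding is_partition_def \<Omega>_def R_def using XV vR R_def by auto
  have sing_not: "\<not> total_k_dom k V E {u}" if "u \<in> X" for u
  proof -
    have "nbhd V E u \<inter> {u} = {}" using irr by (auto simp: nbhd_def)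
    then show ?thesis unfolding total_k_dom_def using that XV k1 by force
  qed
  have R_not: "\<not> total_k_dom k V E R"
  proof -
    have "nbhd V E v \<inter> R = nbhd V E v - X" using R_def NV by auto
    then have "card (nbhd V E v \<inter> R) = ?d - (?d - k + 1)"
      using card_Diff_subset[OF finX XN] dv cX by simp
    also have "\<dots> < k" using kd k1 by linarith
    finally show ?thesis unfolding total_k_dom_def using vV by force
  qed
  have R_td: "total_k_dom k V E (R \<union> {u})" if uX: "u \<in> X" for u
    unfolding total_k_dom_def
  proof (intro conjI ballI)
    show "R \<union> {u} \<subseteq> V" using uX XV R_def by auto
  next
    fix w assume wV: "w \<in> V"
    let ?N = "nbhd V E w"
    have split: "?N = (?N \<inter> R) \<union> (?N \<inter> X)" using NV R_def by auto
    have "card ?N \<le> card (?N \<inter> R) + card (?N \<inter> X)"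
      using split card_Un_le by metis
    then have c1: "card (?N \<inter> R) + card (?N \<inter> X) \<ge> ?d" using dle[OF wV] by linarith
    show "k \<le> card (?N \<inter> (R \<union> {u}))"
    proof (cases "u \<in> ?N")
      case True
      have "?N \<inter> (R \<union> {u}) = insert u (?N \<inter> R)" using True by auto
      moreover have "u \<notin> R" using uX R_def by auto
      ultimately have "card (?N \<inter> (R \<union> {u})) = card (?N \<inter> R) + 1"
        using finN by simp
      moreover have "card (?N \<inter> X) \<le> card X" using finX by (intro card_mono) auto
      ultimately show ?thesis using c1 cX kd by linarith
    next
      case False
      have "?N \<inter> X \<subset> X" using False uX by auto
      then have "card (?N \<inter> X) < card X" using finX by (intro psubset_card_mono) auto
      moreover have "card (?N \<inter> R) \<le> card (?N \<inter> (R \<union> {u}))"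
        using finN by (intro card_mono) auto
      ultimately show ?thesis using c1 cX kd by linarith
    qed
  qed
  have Xne: "X \<noteq> {}" using cX by auto
  then obtain u0 where u0: "u0 \<in> X" by auto
  have coal: "\<forall>A\<in>\<Omega>. \<exists>B\<in>\<Omega>. B \<noteq> A \<and> total_k_coalition k V E A B"
  proof
    fix A assume "A \<in> \<Omega>"
    then consider (s) u where "u \<in> X" "A = {u}" | (r) "A = R" unfolding \<Omega>_def by auto
    then show "\<exists>B\<in>\<Omega>. B \<noteq> A \<and> total_k_coalition k V E A B"
    proof cases
      case s
      have "R \<in> \<Omega>" "R \<noteq> A" using s Rnot by (auto simp: \<Omega>_def)
      moreover have "total_k_coalition k V E A R"
        unfolding total_k_coalition_def using s R_def sing_not R_not R_td[of u]
        by (auto simp: Un_commute)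
      ultimately show ?thesis by blast
    next
      case r
      have "{u0} \<in> \<Omega>" "{u0} \<noteq> A" using r u0 Rnot by (auto simp: \<Omega>_def)
      moreover have "total_k_coalition k V E A {u0}"
        unfolding total_k_coalition_def using r u0 R_def sing_not R_not R_td[of u0]
        by auto
      ultimately show ?thesis by blast
    qed
  qed
  show ?thesis using part coal cO unfolding total_k_coalition_partition_def by blast
qed

lemma lower_TC:
  assumes g: "graph V E" and kd: "min_degree V E \<ge> k" and k1: "k \<ge> 1"
  shows "TC k V E \<ge> min_degree V E - k + 2"
proof -
  obtain \<Omega> where "total_k_coalition_partition k V E \<Omega>" "card \<Omega> = min_degree V E - k + 2"
    using lower[OF assms] by blast
  moreover have "finite V" using g by (simp add: graph_def)
  ultimately show ?thesis unfolding TC_def using tkcp_finite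
    by (metis (mono_tags, lifting) Max_ge finite_imageI image_eqI mem_Collect_eq)
qed

definition KV :: "nat \<Rightarrow> nat set" where "KV k = {0..k}"
definition KE :: "nat \<Rightarrow> nat \<Rightarrow> nat \<Rightarrow> bool" where "KE k u v \<longleftrightarrow> u \<in> KV k \<and> v \<in> KV k \<and> u \<noteq> v"

lemma K_graph: "graph (KV k) (KE k)"
proof -
  have "(KE k)\<^sup>*\<^sup>* u v" if "u \<in> KV k" "v \<in> KV k" for u v
  proof (cases "u = v")
    case True then show ?thesis by simp
  next
    case False
    then have "KE k u v" using that by (simp add: KE_def)
    then show ?thesis by (rule r_into_rtranclp)
  qed
  moreover have "finite (KV k)" "KV k \<noteq> {}" by (auto simp: KV_def)
  ultimately show ?thesis unfolding graph_def by (auto simp: KE_def)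
qed

lemma K_nbhd: "v \<in> KV k \<Longrightarrow> nbhd (KV k) (KE k) v = KV k - {v}"
  by (auto simp: nbhd_def KE_def)

lemma K_mindeg: "min_degree (KV k) (KE k) = k"
proof -
  have "(\<lambda>v. card (nbhd (KV k) (KE k) v)) ` KV k = {k}"
  proof -
    have "\<And>v. v \<in> KV k \<Longrightarrow> card (nbhd (KV k) (KE k) v) = k"
    proof -
      fix v assume v: "v \<in> KV k"
      have "card (KV k - {v}) = k" using v by (simp add: KV_def)
      then show "card (nbhd (KV k) (KE k) v) = k" by (simp add: K_nbhd[OF v])
    qed
    moreover have "KV k \<noteq> {}" by (auto simp: KV_def)
    ultimately show ?thesis by force
  qed
  then show ?thesis by (simp add: min_degree_def)
qed

lemma K_upper:
  assumes "total_k_coalition_partition k (KV k) (KE k) \<Omega>"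
  shows "card \<Omega> \<le> 2"
proof -
  have P: "is_partition (KV k) \<Omega>" using assms by (simp add: total_k_coalition_partition_def)
  have "KV k \<noteq> {}" by (auto simp: KV_def)
  then obtain A where A: "A \<in> \<Omega>" using P unfolding is_partition_def by blast
  then obtain B where B: "B \<in> \<Omega>" "B \<noteq> A" "total_k_coalition k (KV k) (KE k) A B"
    using assms by (auto simp: total_k_coalition_partition_def)
  have td: "total_k_dom k (KV k) (KE k) (A \<union> B)" using B by (simp add: total_k_coalition_def)
  have "A \<noteq> {}" using A P by (auto simp: is_partition_def)
  then obtain x where x: "x \<in> A" by auto
  have SV: "A \<union> B \<subseteq> KV k" using td by (simp add: total_k_dom_def)
  have xV: "x \<in> KV k" using x SV by auto
  have "k \<le> card (nbhd (KV k) (KE k) x \<inter> (A \<union> B))" using td xV by (simp add: total_k_dom_def)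
  also have "nbhd (KV k) (KE k) x \<inter> (A \<union> B) = (A \<union> B) - {x}" using K_nbhd[OF xV] SV by auto
  also have "card \<dots> = card (A \<union> B) - 1" using x finite_subset[OF SV] by (simp add: KV_def)
  finally have c: "k \<le> card (A \<union> B) - 1" .
  have "card (A \<union> B) \<ge> 1" using x finite_subset[OF SV]
    by (metis KV_def Un_iff card_0_eq empty_iff finite_atLeastAtMost less_one not_le)
  with c have "card (A \<union> B) \<ge> k + 1" by linarith
  moreover have "card (KV k) = k + 1" by (simp add: KV_def)
  ultimately have eq: "A \<union> B = KV k" using SV
    by (metis card_seteq finite_atLeastAtMost KV_def)
  have "\<Omega> \<subseteq> {A, B}"
  proof
    fix C assume C: "C \<in> \<Omega>"
    show "C \<in> {A, B}"
    proof (rule ccontr)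
      assume "C \<notin> {A, B}"
      then have "C \<inter> A = {}" "C \<inter> B = {}" using P C A B by (auto simp: is_partition_def)
      moreover have "C \<noteq> {}" "C \<subseteq> KV k" using P C by (auto simp: is_partition_def)
      ultimately show False using eq by blast
    qed
  qed
  then have "card \<Omega> \<le> card {A, B}" by (intro card_mono) simp_all
  also have "card {A, B} \<le> 2" by (cases "A = B") simp_all
  finally show ?thesis .
qed

theorem theorem3p1:
  fixes k :: nat
  assumes "k \<ge> 1"
  shows "(\<forall>(V :: 'a set) E. graph V E \<and> min_degree V E \<ge> k
            \<longrightarrow> TC k V E \<ge> min_degree V E - k + 2)
       \<and> (\<exists>(V :: nat set) E. graph V E \<and> min_degree V E \<ge> k
            \<and> TC k V E = min_degree V E - k + 2)"
proof
  show "\<forall>(V :: 'a set) E. graph V E \<and> min_degree V E \<ge> k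
            \<longrightarrow> TC k V E \<ge> min_degree V E - k + 2"
    using lower_TC assms by blast
next
  have lo: "TC k (KV k) (KE k) \<ge> 2"
    using lower_TC[OF K_graph _ assms, of k] K_mindeg by simp
  have fin: "finite {\<Omega>. total_k_coalition_partition k (KV k) (KE k) \<Omega>}"
    by (rule tkcp_finite) (simp add: KV_def)
  obtain \<Omega>0 where "total_k_coalition_partition k (KV k) (KE k) \<Omega>0"
    using lower[OF K_graph _ assms, of k] K_mindeg by auto
  then have ne: "card ` {\<Omega>. total_k_coalition_partition k (KV k) (KE k) \<Omega>} \<noteq> {}" by auto
  have "TC k (KV k) (KE k) \<le> 2"
    unfolding TC_def using fin ne K_upper by (subst Max_le_iff) auto
  then have "TC k (KV k) (KE k) = 2" using lo by simp
  then show "\<exists>(V :: nat set) E. graph V E \<and> min_degree V E \<ge> k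
            \<and> TC k V E = min_degree V E - k + 2"
    using K_graph K_mindeg by (intro exI[of _ "KV k"] exI[of _ "KE k"]) simp
qed

end
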